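(* Let $f:[0,1]\to\mathbb{R}$ be a $C^2$ function such that $f'(0)\ge 0$, $\inf_{[0,1]}f''>0$, $f'''$ exists and is bounded on $(0,1)$, and $f'f'''-(f'')^2\le0$ on $(0,1)$. Let $x_0\in[0,1]$, let $0<\tilde a\le a$, and suppose $(u,v)\in\mathbb{R}^2$ with $x_0-u\in[0,1]$ solves $$a f(x_0-u)+v=\tilde a f(x_0),\qquad a f'(x_0-u)=\tilde a f'(x_0).$$ Then $a f(x-u)+v\ge \tilde a f(x)$ for every $x$ with $x\in[0,1]$ and $x-u\in[0,1]$. *)

theory Defs
  imports "HOL-Analysis.Analysis"
begin

end

theory Submission
  imports Defs
begin

theorem lemma2p1:
  fixes f f1 f2 f3 :: "real \<Rightarrow> real"
    and x0 a a' u v :: real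
  assumes d1: "\<forall>x\<in>{0..1}. (f has_real_derivative f1 x) (at x within {0..1})"
    and d2: "\<forall>x\<in>{0..1}. (f1 has_real_derivative f2 x) (at x within {0..1})"
    and c2: "continuous_on {0..1} f2"
    and d3: "\<forall>x\<in>{0<..<1}. (f2 has_real_derivative f3 x) (at x)"
    and b3: "bounded (f3 ` {0<..<1})"
    and f1_0: "f1 0 \<ge> 0"
    and inf_pos: "(INF x\<in>{0..1}. f2 x) > 0"
    and ineq: "\<forall>x\<in>{0<..<1}. f1 x * f3 x - (f2 x)^2 \<le> 0"
    and x0: "x0 \<in> {0..1}"
    and a: "0 < a'" "a' \<le> a"
    and xu: "x0 - u \<in> {0..1}"
    and eq1: "a * f (x0 - u) + v = a' * f x0"
    and eq2: "a * f1 (x0 - u) = a' * f1 x0"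
  shows "\<forall>x. x \<in> {0..1} \<and> x - u \<in> {0..1} \<longrightarrow> a * f (x - u) + v \<ge> a' * f x"
proof -
  have D1: "(f has_real_derivative f1 x) (at x)" if "0 < x" "x < 1" for x
    using d1[rule_format, of x] that at_within_Icc_at[of 0 x 1] by simp
  have D2: "(f1 has_real_derivative f2 x) (at x)" if "0 < x" "x < 1" for x
    using d2[rule_format, of x] that at_within_Icc_at[of 0 x 1] by simp
  have cf: "continuous_on {0..1} f"
    using d1 DERIV_continuous continuous_on_eq_continuous_within by blast
  have cf1: "continuous_on {0..1} f1"
    using d2 DERIV_continuous continuous_on_eq_continuous_within by blast
  have bb: "bdd_below (f2 ` {0..1})"
    by (intro bounded_imp_bdd_below compact_imp_bounded compact_continuous_image c2) simp
  have f2pos: "f2 x > 0" if "x \<in> {0..1}" for x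
    using cINF_lower[OF bb that] inf_pos by linarith
  have f1strict: "f1 y < f1 z" if "0 \<le> y" "y < z" "z \<le> 1" for y z
  proof (rule DERIV_pos_imp_increasing_open[OF that(2)])
    show "\<exists>d. (f1 has_real_derivative d) (at t) \<and> 0 < d" if "y < t" "t < z" for t
      using D2[of t] f2pos[of t] that \<open>0 \<le> y\<close> \<open>z \<le> 1\<close> by auto
    show "continuous_on {y..z} f1"
      using cf1 by (rule continuous_on_subset) (use that in auto)
  qed
  have f1nn: "f1 x \<ge> 0" if "x \<in> {0..1}" for x
    using f1strict[of 0 x] f1_0 that by (cases "x = 0") auto
  have f1pos: "f1 x > 0" if "0 < x" "x \<le> 1" for x
    using f1strict[of 0 x] f1_0 that by auto
  have psi: "f1 y / f2 y \<le> f1 z / f2 z" if "0 \<le> y" "y \<le> z" "z \<le> 1" for y z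
  proof (rule DERIV_nonneg_imp_increasing_open[OF that(2)])
    fix t assume t: "y < t" "t < z"
    then have t01: "0 < t" "t < 1" using that by auto
    have "((\<lambda>t. f1 t / f2 t) has_real_derivative
           (f2 t * f2 t - f3 t * f1 t) / (f2 t ^ 2)) (at t)"
      using DERIV_quotient[OF D2[OF t01] d3[rule_format, of t]] f2pos[of t] t01 by (auto simp: power2_eq_square)
    moreover have "(f2 t * f2 t - f3 t * f1 t) / (f2 t ^ 2) \<ge> 0"
      using ineq[rule_format, of t] t01 by (auto simp: power2_eq_square algebra_simps)
    ultimately show "\<exists>d. ((\<lambda>t. f1 t / f2 t) has_real_derivative d) (at t) \<and> 0 \<le> d" by blast
  next
    have "continuous_on {y..z} f1" "continuous_on {y..z} f2"
      using continuous_on_subset[OF cf1] continuous_on_subset[OF c2] that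
      by (meson atLeastatMost_subset_iff)+
    then show "continuous_on {y..z} (\<lambda>t. f1 t / f2 t)"
      using f2pos that by (intro continuous_on_divide) (auto, smt (verit) atLeastAtMost_iff)
  qed
  have u0: "u \<ge> 0"
  proof (rule ccontr)
    assume "\<not> u \<ge> 0"
    then have "f1 x0 < f1 (x0 - u)" using f1strict[of x0 "x0 - u"] x0 xu by auto
    moreover have "f1 x0 \<ge> 0" using f1nn x0 by auto
    ultimately have "a' * f1 x0 < a * f1 (x0 - u)"
      using a by (smt (verit) mult_right_mono mult_strict_left_mono)
    then show False using eq2 by simp
  qed
  have key: "(x0 \<le> x \<longrightarrow> a' * f1 x \<le> a * f1 (x - u)) \<and> (x \<le> x0 \<longrightarrow> a * f1 (x - u) \<le> a' * f1 x)"
    if x: "x \<in> {0..1}" "x - u \<in> {0..1}" for x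
  proof (cases "u = 0")
    case True
    have e: "(a - a') * f1 x0 = 0" using eq2 True by (simp add: algebra_simps)
    have n: "f1 x \<ge> 0" using f1nn x by auto
    have le: "x \<le> x0 \<Longrightarrow> f1 x \<le> f1 x0" using f1strict[of x x0] x x0 by (cases "x = x0") auto
    have "x \<le> x0 \<Longrightarrow> (a - a') * f1 x \<le> (a - a') * f1 x0"
      using le a by (intro mult_left_mono) auto
    moreover have "(a - a') * f1 x \<ge> 0" using n a by simp
    ultimately show ?thesis using e True by (auto simp: algebra_simps)
  next
    case False
    with u0 have upos: "u > 0" by simp
    have phi: "f1 (y - u) * f1 z \<le> f1 (z - u) * f1 y" if "u \<le> y" "y \<le> z" "z \<le> 1" for y z
    proof -
      have "f1 (y - u) / f1 y \<le> f1 (z - u) / f1 z"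
      proof (rule DERIV_nonneg_imp_increasing_open[OF that(2)])
        fix t assume t: "y < t" "t < z"
        then have t01: "0 < t" "t < 1" "0 < t - u" "t - u < 1" using that upos by auto
        have dd: "((\<lambda>t. f1 (t - u)) has_real_derivative f2 (t - u) * 1) (at t)"
          by (rule DERIV_chain2[where g="\<lambda>t. t - u" and x=t, OF D2[OF t01(3,4)]]) (auto intro!: derivative_eq_intros)
        have "((\<lambda>t. f1 (t - u) / f1 t) has_real_derivative
           (f2 (t - u) * 1 * f1 t - f2 t * f1 (t - u)) / (f1 t ^ 2)) (at t)"
          using DERIV_quotient[OF dd D2[OF t01(1,2)]] f1pos[of t] t01 by (auto simp: power2_eq_square)
        moreover have "f2 (t - u) * 1 * f1 t - f2 t * f1 (t - u) \<ge> 0"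
        proof -
          have "f1 (t - u) / f2 (t - u) \<le> f1 t / f2 t"
            using psi[of "t - u" t] t01 upos by auto
          moreover have "f2 t > 0" "f2 (t - u) > 0" using f2pos t01 by auto
          ultimately show ?thesis by (simp add: field_simps)
        qed
        ultimately show "\<exists>d. ((\<lambda>t. f1 (t - u) / f1 t) has_real_derivative d) (at t) \<and> 0 \<le> d"
          by (metis divide_nonneg_pos f1pos t01(1,2) less_imp_le zero_less_power)
      next
        have "continuous_on {y..z} f1"
          by (rule continuous_on_subset[OF cf1]) (use that upos in auto)
        moreover have "continuous_on {y..z} (\<lambda>t. f1 (t - u))"
          by (rule continuous_on_compose2[OF cf1]) (use that upos in \<open>auto intro!: continuous_intros\<close>)
        ultimately show "continuous_on {y..z} (\<lambda>t. f1 (t - u) / f1 t)"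
          using f1pos that upos by (intro continuous_on_divide) (auto, smt (verit) atLeastAtMost_iff)
      qed
      moreover have "f1 y > 0" "f1 z > 0" using f1pos that upos by auto
      ultimately show ?thesis by (simp add: field_simps)
    qed
    have fx0: "f1 x0 > 0" using f1pos[of x0] xu x0 upos by auto
    have fx: "f1 x > 0" using f1pos[of x] x upos by auto
    show ?thesis
    proof safe
      assume "x0 \<le> x"
      then have "f1 (x0 - u) * f1 x \<le> f1 (x - u) * f1 x0" using phi[of x0 x] xu x by auto
      then have "a * f1 (x0 - u) * f1 x \<le> a * f1 (x - u) * f1 x0"
        using a by (smt (verit) mult.assoc mult_left_mono)
      then have "a' * f1 x * f1 x0 \<le> a * f1 (x - u) * f1 x0" using eq2 by (simp add: algebra_simps)
      then show "a' * f1 x \<le> a * f1 (x - u)" using fx0 by simp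
    next
      assume "x \<le> x0"
      then have "f1 (x - u) * f1 x0 \<le> f1 (x0 - u) * f1 x" using phi[of x x0] x0 x by auto
      then have "a * f1 (x - u) * f1 x0 \<le> a * f1 (x0 - u) * f1 x"
        using a by (smt (verit) mult.assoc mult_left_mono)
      then have "a * f1 (x - u) * f1 x0 \<le> a' * f1 x * f1 x0" using eq2 by (simp add: algebra_simps)
      then show "a * f1 (x - u) \<le> a' * f1 x" using fx0 by simp
    qed
  qed
  define g where "g t = a * f (t - u) + v - a' * f t" for t
  have g0: "g x0 = 0" using eq1 by (simp add: g_def)
  have gd: "(g has_real_derivative a * f1 (t - u) - a' * f1 t) (at t)"
    if "0 < t" "t < 1" "0 < t - u" "t - u < 1" for t
  proof -
    have dd: "((\<lambda>t. f (t - u)) has_real_derivative f1 (t - u) * 1) (at t)"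
      by (rule DERIV_chain2[where g="\<lambda>t. t - u" and x=t, OF D1[OF that(3,4)]]) (auto intro!: derivative_eq_intros)
    show ?thesis unfolding g_def
      using dd D1[OF that(1,2)] by (auto intro!: derivative_eq_intros)
  qed
  have gc: "continuous_on {p..q} g" if "{p..q} \<subseteq> {0..1}" "(\<lambda>t. t - u) ` {p..q} \<subseteq> {0..1}" for p q
  proof -
    have "continuous_on {p..q} (\<lambda>t. f (t - u))"
      by (rule continuous_on_compose2[OF cf]) (use that in \<open>auto intro!: continuous_intros\<close>)
    moreover have "continuous_on {p..q} f" using cf that continuous_on_subset by blast
    ultimately show ?thesis unfolding g_def by (intro continuous_intros)
  qed
  show ?thesis
  proof safe
    fix x assume x: "x \<in> {0..1}" "x - u \<in> {0..1}"
    have "g x \<ge> 0"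
    proof (cases "x0 \<le> x")
      case True
      have "g x0 \<le> g x"
      proof (rule DERIV_nonneg_imp_increasing_open[OF True])
        fix t assume t: "x0 < t" "t < x"
        then have "0 < t" "t < 1" "0 < t - u" "t - u < 1" using x x0 xu by auto
        then show "\<exists>d. (g has_real_derivative d) (at t) \<and> 0 \<le> d"
          using gd key[of t] t
          by (intro exI[of _ "a * f1 (t - u) - a' * f1 t"]) auto
      next
        show "continuous_on {x0..x} g" using x x0 xu by (intro gc) auto
      qed
      then show ?thesis using g0 by simp
    next
      case False
      then have F: "x \<le> x0" by simp
      have "g x0 \<le> g x"
      proof (rule DERIV_nonpos_imp_decreasing_open[OF F])
        fix t assume t: "x < t" "t < x0"
        then have "0 < t" "t < 1" "0 < t - u" "t - u < 1" using x x0 xu by auto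
        then show "\<exists>d. (g has_real_derivative d) (at t) \<and> d \<le> 0"
          using gd key[of t] t
          by (intro exI[of _ "a * f1 (t - u) - a' * f1 t"]) auto
      next
        show "continuous_on {x..x0} g" using x x0 xu by (intro gc) auto
      qed
      then show ?thesis using g0 by simp
    qed
    then show "a' * f x \<le> a * f (x - u) + v" by (simp add: g_def)
  qed
qed

end
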